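(* Let $I=[r,s]$ and let $C$ be an $I$-vertex-stable strongly connected component with $|C|\ge 2$ and $D(C)<\infty$. Let $x$ be the maximal round in $[r,s]$ with $x+D^x(C)-1\le s$. Then (i) for every $x'\in[r,x]$ it holds that $x'+D^{x'}(C)-1\le s$ and $D^{x'}(C)\le D(C)$; and (ii) $x\ge\max\{s-|C|+2,\,r\}$.
   Context: A finite set $\Pi$ of $n\ge2$ processes is given together with an infinite sequence of simple directed graphs $\mathcal{G}^1,\mathcal{G}^2,\dots$ on vertex set $\Pi$ ($\mathcal{G}^t$ is the round-$t$ communication graph). Process $p$ causally influences $q$ in round $t$ if $q=p$ or $(p\to q)\in\mathcal{G}^t$. A causal chain of length $k\ge1$ from $p$ in round $t$ to $q$ is a sequence $p=p_0,\dots,p_k=q$ with $p_i$ causally influencing $p_{i+1}$ in round $t+i$ for $0\le i<k$; the causal distance $d_t(p,q)$ is the minimum length of such a chain ($\infty$ if none). For an interval $I=[r,s]$, a set $C\subseteq\Pi$ is an $I$-vertex-stable strongly connected component if for every $p\in C$ and every round $t\in I$, the vertex set of the strongly connected component of $\mathcal{G}^t$ containing $p$ equals $C$. Its round-$x$ causal diameter is $D^x(C)=\max_{p,q\in C} d_x(p,q)$, and its causal diameter is $D(C)=\max\{D^x(C): x\in[r,s],\ x+D^x(C)-1\le s\}$ if this set is nonempty, and $D(C)=\infty$ otherwise. *)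

theory Defs
  imports Main "HOL-Library.Extended_Nat"
begin

text \<open>Processes form a finite type 'p (the set \<Pi> = UNIV). A communication pattern is
  a sequence G :: nat \<Rightarrow> ('p \<times> 'p) set; G t is the edge set of round t (t \<ge> 1).\<close>

definition influences :: "(nat \<Rightarrow> ('p \<times> 'p) set) \<Rightarrow> nat \<Rightarrow> 'p \<Rightarrow> 'p \<Rightarrow> bool" where
  "influences G t p q \<longleftrightarrow> q = p \<or> (p, q) \<in> G t"

definition causal_chain :: "(nat \<Rightarrow> ('p \<times> 'p) set) \<Rightarrow> nat \<Rightarrow> 'p \<Rightarrow> 'p \<Rightarrow> nat \<Rightarrow> bool" where
  "causal_chain G t p q k \<longleftrightarrow> k \<ge> 1 \<and>
     (\<exists>ps :: nat \<Rightarrow> 'p. ps 0 = p \<and> ps k = q \<and>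
        (\<forall>i<k. influences G (t + i) (ps i) (ps (Suc i))))"

definition causal_dist :: "(nat \<Rightarrow> ('p \<times> 'p) set) \<Rightarrow> nat \<Rightarrow> 'p \<Rightarrow> 'p \<Rightarrow> enat" where
  "causal_dist G t p q =
     (if \<exists>k. causal_chain G t p q k then enat (LEAST k. causal_chain G t p q k) else \<infinity>)"

definition scc_of :: "('p \<times> 'p) set \<Rightarrow> 'p \<Rightarrow> 'p set" where
  "scc_of E p = {q. (p, q) \<in> E\<^sup>* \<and> (q, p) \<in> E\<^sup>*}"

definition vertex_stable_scc :: "(nat \<Rightarrow> ('p \<times> 'p) set) \<Rightarrow> nat \<Rightarrow> nat \<Rightarrow> 'p set \<Rightarrow> bool" where
  "vertex_stable_scc G r s C \<longleftrightarrow> (\<forall>p\<in>C. \<forall>t\<in>{r..s}. scc_of (G t) p = C)"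

definition causal_diam_at :: "(nat \<Rightarrow> ('p \<times> 'p) set) \<Rightarrow> nat \<Rightarrow> 'p set \<Rightarrow> enat" where
  "causal_diam_at G x C = Sup {causal_dist G x p q | p q. p \<in> C \<and> q \<in> C}"

text \<open>Admissibility condition x + D^x(C) - 1 \<le> s (in enat; \<infinity> - 1 = \<infinity>).\<close>
definition admissible :: "(nat \<Rightarrow> ('p \<times> 'p) set) \<Rightarrow> nat \<Rightarrow> 'p set \<Rightarrow> nat \<Rightarrow> bool" where
  "admissible G s C x \<longleftrightarrow> enat x + causal_diam_at G x C - 1 \<le> enat s"

definition causal_diam :: "(nat \<Rightarrow> ('p \<times> 'p) set) \<Rightarrow> nat \<Rightarrow> nat \<Rightarrow> 'p set \<Rightarrow> enat" where
  "causal_diam G r s C =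
     (let A = {causal_diam_at G x C | x. x \<in> {r..s} \<and> admissible G s C x}
      in if A \<noteq> {} then Max A else \<infinity>)"

end

theory Submission
  imports Defs
begin


lemma dist_le_chain: "causal_chain G t p q k \<Longrightarrow> causal_dist G t p q \<le> enat k"
  unfolding causal_dist_def by (auto intro: Least_le)

lemma dist_shift:
  assumes "y \<le> z"
  shows "causal_dist G y p q \<le> enat (z - y) + causal_dist G z p q"
proof (cases "\<exists>k. causal_chain G z p q k")
  case False then show ?thesis by (simp add: causal_dist_def)
next
  case True
  define k where "k = (LEAST k. causal_chain G z p q k)"
  have ck: "causal_chain G z p q k" unfolding k_def using True by (rule LeastI_ex)
  then obtain ps where ps: "k \<ge> 1" "ps 0 = p" "ps k = q"
    "\<forall>i<k. influences G (z + i) (ps i) (ps (Suc i))" unfolding causal_chain_def by blast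
  define d where "d = z - y"
  define qs where "qs = (\<lambda>i. if i \<le> d then p else ps (i - d))"
  have "causal_chain G y p q (d + k)"
    unfolding causal_chain_def
  proof (intro conjI exI[of _ qs])
    show "1 \<le> d + k" using ps by simp
    show "qs 0 = p" by (simp add: qs_def)
    show "qs (d + k) = q" using ps by (simp add: qs_def)
    show "\<forall>i<d + k. influences G (y + i) (qs i) (qs (Suc i))"
    proof (intro allI impI)
      fix i assume i: "i < d + k"
      show "influences G (y + i) (qs i) (qs (Suc i))"
      proof (cases "i < d")
        case True then show ?thesis by (simp add: qs_def influences_def)
      next
        case False
        then have "i - d < k" using i by simp
        then have "influences G (z + (i - d)) (ps (i - d)) (ps (Suc (i - d)))" using ps by blast
        moreover have "z + (i - d) = y + i" using False assms d_def by simp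
        moreover have "Suc i - d = Suc (i - d)" using False by simp
        ultimately show ?thesis using False ps(2) by (auto simp: qs_def influences_def)
      qed
    qed
  qed
  then have "causal_dist G y p q \<le> enat (d + k)" by (rule dist_le_chain)
  moreover have "causal_dist G z p q = enat k" using True by (simp add: causal_dist_def k_def)
  ultimately show ?thesis by (simp add: d_def)
qed

lemma diam_shift:
  assumes "y \<le> z"
  shows "causal_diam_at G y C \<le> enat (z - y) + causal_diam_at G z C"
  unfolding causal_diam_at_def
proof (rule Sup_least)
  fix u assume "u \<in> {causal_dist G y p q |p q. p \<in> C \<and> q \<in> C}"
  then obtain p q where u: "u = causal_dist G y p q" "p \<in> C" "q \<in> C" by blast
  have zz: "causal_dist G z p q \<le> Sup {causal_dist G z p q |p q. p \<in> C \<and> q \<in> C}"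
    using u by (auto intro: Sup_upper)
  then show "u \<le> enat (z - y) + Sup {causal_dist G z p q |p q. p \<in> C \<and> q \<in> C}"
    using order_trans[OF dist_shift[OF assms, of G p q] add_left_mono[OF zz]] u(1) by simp
qed

lemma adm_mono:
  assumes "y \<le> z" "admissible G s C z"
  shows "admissible G s C y"
proof -
  have "enat y + causal_diam_at G y C \<le> enat z + causal_diam_at G z C"
  proof -
    have "enat y + causal_diam_at G y C \<le> enat y + (enat (z - y) + causal_diam_at G z C)"
      using diam_shift[OF assms(1)] by (rule add_left_mono)
    also have "\<dots> = enat z + causal_diam_at G z C" using assms(1)
      by (simp add: add.assoc[symmetric])
    finally show ?thesis .
  qed
  then have "enat y + causal_diam_at G y C - 1 \<le> enat z + causal_diam_at G z C - 1"
    by (cases "enat y + causal_diam_at G y C"; cases "enat z + causal_diam_at G z C") (auto simp: one_enat_def)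
  then show ?thesis using assms(2) unfolding admissible_def by (rule order_trans)
qed

lemma scc_edge:
  assumes scc: "\<And>p. p \<in> C \<Longrightarrow> scc_of E p = C"
    and S: "S \<subseteq> C" "p \<in> S" and q: "q \<in> C" "q \<notin> S"
  shows "\<exists>a b. a \<in> S \<and> b \<in> C \<and> b \<notin> S \<and> (a, b) \<in> E"
proof -
  have pC: "p \<in> C" using S by blast
  have "(p, q) \<in> E\<^sup>*" using scc[OF pC] q unfolding scc_of_def by blast
  then show ?thesis using q
  proof (induction rule: rtrancl_induct)
    case base then show ?case using S by blast
  next
    case (step u z)
    have "(z, p) \<in> E\<^sup>*" using scc[OF pC] step.prems unfolding scc_of_def by blast
    then have "(u, p) \<in> E\<^sup>*" using step.hyps(2) by (meson converse_rtrancl_into_rtrancl)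
    then have uC: "u \<in> C" using scc[OF pC] step.hyps(1) unfolding scc_of_def by blast
    show ?case
    proof (cases "u \<in> S")
      case True then show ?thesis using step by blast
    next
      case False then show ?thesis using step.IH uC by blast
    qed
  qed
qed

definition reach :: "(nat \<Rightarrow> ('p \<times> 'p) set) \<Rightarrow> nat \<Rightarrow> 'p \<Rightarrow> nat \<Rightarrow> 'p set" where
  "reach G y p k = {q. \<exists>ps. ps 0 = p \<and> ps k = q \<and> (\<forall>i<k. influences G (y + i) (ps i) (ps (Suc i)))}"

lemma reach_ext:
  assumes "a \<in> reach G y p k" "influences G (y + k) a b"
  shows "b \<in> reach G y p (Suc k)"
proof -
  obtain ps where ps: "ps 0 = p" "ps k = a" "\<forall>i<k. influences G (y + i) (ps i) (ps (Suc i))"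
    using assms(1) unfolding reach_def by blast
  define qs where "qs = ps(Suc k := b)"
  have "qs 0 = p" "qs (Suc k) = b" using ps by (auto simp: qs_def)
  moreover have "\<forall>i<Suc k. influences G (y + i) (qs i) (qs (Suc i))"
  proof (intro allI impI)
    fix i assume "i < Suc k"
    then show "influences G (y + i) (qs i) (qs (Suc i))"
      using ps assms(2) by (cases "i = k") (auto simp: qs_def)
  qed
  ultimately show ?thesis unfolding reach_def by blast
qed

lemma reach_mono: "a \<in> reach G y p k \<Longrightarrow> a \<in> reach G y p (Suc k)"
  by (rule reach_ext) (auto simp: influences_def)

lemma growth:
  fixes C :: "'p::finite set"
  assumes stable: "vertex_stable_scc G r s C" and pC: "p \<in> C" and yr: "r \<le> y"
  shows "y + k \<le> s + 1 \<Longrightarrow> card (reach G y p k \<inter> C) \<ge> min (k + 1) (card C)"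
proof (induction k)
  case 0
  have "p \<in> reach G y p 0" unfolding reach_def by auto
  then have "reach G y p 0 \<inter> C \<noteq> {}" using pC by blast
  then have "card (reach G y p 0 \<inter> C) \<ge> 1" by (simp add: Suc_leI card_gt_0_iff)
  then show ?case by simp
next
  case (Suc k)
  have IH: "card (reach G y p k \<inter> C) \<ge> min (k + 1) (card C)" using Suc by simp
  have sub: "reach G y p k \<inter> C \<subseteq> reach G y p (Suc k) \<inter> C"
    proof
      fix a assume "a \<in> reach G y p k \<inter> C"
      then show "a \<in> reach G y p (Suc k) \<inter> C" using reach_mono[of a G y p k] by simp
    qed
  show ?case
  proof (cases "C \<subseteq> reach G y p k")
    case True
    then have "C \<subseteq> reach G y p (Suc k) \<inter> C" using sub by blast
    then have "card C \<le> card (reach G y p (Suc k) \<inter> C)" by (simp add: card_mono)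
    then show ?thesis by simp
  next
    case False
    then obtain q where q: "q \<in> C" "q \<notin> reach G y p k \<inter> C" by blast
    have p0: "p \<in> reach G y p k \<inter> C"
    proof -
      have "p \<in> reach G y p k" unfolding reach_def
        by (rule CollectI, rule exI[of _ "\<lambda>_. p"]) (auto simp: influences_def)
      then show ?thesis using pC by blast
    qed
    have rnd: "y + k \<in> {r..s}" using Suc.prems yr by auto
    have scc: "\<And>p. p \<in> C \<Longrightarrow> scc_of (G (y + k)) p = C"
      using stable rnd unfolding vertex_stable_scc_def by blast
    obtain a b where ab: "a \<in> reach G y p k \<inter> C" "b \<in> C" "b \<notin> reach G y p k \<inter> C"
      "(a, b) \<in> G (y + k)"
      using scc_edge[OF scc Int_lower2 p0 q] by blast
    have "b \<in> reach G y p (Suc k)" using ab by (intro reach_ext[of a]) (auto simp: influences_def)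
    then have "insert b (reach G y p k \<inter> C) \<subseteq> reach G y p (Suc k) \<inter> C" using sub ab by blast
    then have "card (insert b (reach G y p k \<inter> C)) \<le> card (reach G y p (Suc k) \<inter> C)"
      by (simp add: card_mono)
    moreover have "card (insert b (reach G y p k \<inter> C)) = Suc (card (reach G y p k \<inter> C))"
      using ab(3) by simp
    ultimately show ?thesis using IH by simp
  qed
qed

lemma adm_from_stable:
  fixes C :: "'p::finite set"
  assumes stable: "vertex_stable_scc G r s C" and yr: "r \<le> y" and C2: "card C \<ge> 2"
    and ys: "y + (card C - 1) \<le> s + 1"
  shows "admissible G s C y"
proof -
  define k where "k = card C - 1"
  have k1: "k \<ge> 1" using C2 k_def by simp
  have dk: "causal_dist G y p q \<le> enat k" if pq: "p \<in> C" "q \<in> C" for p q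
  proof -
    have "card (reach G y p k \<inter> C) \<ge> min (k + 1) (card C)"
      using growth[OF stable pq(1) yr, of k] ys k_def by simp
    then have "card (reach G y p k \<inter> C) \<ge> card C" using k_def C2 by simp
    then have "reach G y p k \<inter> C = C"
      by (intro card_seteq) auto
    then have "q \<in> reach G y p k" using pq by blast
    then have "causal_chain G y p q k" using k1 unfolding reach_def causal_chain_def by blast
    then show ?thesis by (rule dist_le_chain)
  qed
  have "causal_diam_at G y C \<le> enat k"
    unfolding causal_diam_at_def by (rule Sup_least) (auto intro: dk)
  then have "enat y + causal_diam_at G y C - 1 \<le> enat y + enat k - 1"
    by (cases "causal_diam_at G y C") (auto simp: one_enat_def)
  also have "\<dots> \<le> enat s" using ys k_def k1 by (simp add: one_enat_def)
  finally show ?thesis unfolding admissible_def .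
qed


theorem lemma3:
  fixes G :: "nat \<Rightarrow> ('p::finite \<times> 'p) set" and r s x :: nat and C :: "'p set"
  assumes n2: "card (UNIV :: 'p set) \<ge> 2"
    and simple: "\<And>t p. (p, p) \<notin> G t"
    and r1: "1 \<le> r"
    and stable: "vertex_stable_scc G r s C"
    and Cge2: "card C \<ge> 2"
    and Dfin: "causal_diam G r s C < \<infinity>"
    and x_in: "x \<in> {r..s}"
    and x_adm: "admissible G s C x"
    and x_max: "\<And>y. y \<in> {r..s} \<Longrightarrow> admissible G s C y \<Longrightarrow> y \<le> x"
  shows "(\<forall>x'\<in>{r..x}. admissible G s C x' \<and> causal_diam_at G x' C \<le> causal_diam G r s C)
         \<and> int x \<ge> max (int s - int (card C) + 2) (int r)"
proof
  define A where "A = {causal_diam_at G x C | x. x \<in> {r..s} \<and> admissible G s C x}"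
  have Ane: "A \<noteq> {}" using x_in x_adm A_def by blast
  have Afin: "finite A"
  proof -
    have "A \<subseteq> (\<lambda>x. causal_diam_at G x C) ` {r..s}" unfolding A_def by blast
    then show ?thesis by (rule finite_subset) simp
  qed
  have DA: "causal_diam G r s C = Max A" using Ane unfolding causal_diam_def A_def Let_def by simp
  show "\<forall>x'\<in>{r..x}. admissible G s C x' \<and> causal_diam_at G x' C \<le> causal_diam G r s C"
  proof
    fix x' assume x': "x' \<in> {r..x}"
    have adm: "admissible G s C x'" using adm_mono[of x' x G s C] x' x_adm by simp
    have inA: "causal_diam_at G x' C \<in> A" unfolding A_def using adm x' x_in by auto
    have "causal_diam_at G x' C \<le> Max A" using Max_ge[OF Afin inA] .
    then have "causal_diam_at G x' C \<le> causal_diam G r s C" by (subst DA)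
    with adm show "admissible G s C x' \<and> causal_diam_at G x' C \<le> causal_diam G r s C"
      by (rule conjI)
  qed
  show "int x \<ge> max (int s - int (card C) + 2) (int r)"
  proof (rule ccontr)
    assume "\<not> ?thesis"
    then have lt: "x + card C \<le> s + 1" using x_in by auto
    have "admissible G s C (x + 1)"
      using adm_from_stable[OF stable _ Cge2, of "x + 1"] x_in lt Cge2 by simp
    moreover have "x + 1 \<in> {r..s}" using x_in lt Cge2 by simp
    ultimately have "x + 1 \<le> x" using x_max by blast
    then show False by linarith
  qed
qed

end
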